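(* Let $A$ be a finite totally ordered alphabet, let $M=\{n_{1},\dots,n_{t}\}$ be a finite multiset of necklaces with $n_{i}=n(u_{i})$ for primitive words $u_{i}$, and let $n=|n_{1}|+\cdots+|n_{t}|$. Let $w=BW(M)\in A^{n}$ and let $S(M)$ be the subsemigroup of $POI_{n}$ generated by the mappings $\pi_{a}$ $(a\in A)$ of the standard permutation $\pi=\pi(w)$. Then $S(M)$ is isomorphic to a subdirect product of the syntactic semigroups $S_{u_{1}},\dots,S_{u_{t}}$.
   Context: Words are compared lexicographically. A word is primitive if it is not a proper power of another word; a necklace is the set of conjugates ($xy\sim yx$) of a primitive word, and its length is the length of its words. $[n]=\{0<1<\cdots<n-1\}$; $POI_{n}$ is the semigroup of all one-to-one, order-preserving partial maps on $[n]$ under composition (maps composed left to right). Burrows–Wheeler map: given a multiset $M$ of necklaces, let $l$ be the lcm of their lengths; form the list of all words $v^{l/|v|}$ where $v$ ranges over the words of each necklace of $M$ (with multiplicity), sorted lexicographically; this is an $n\times l$ table $T(M)$ and $BW(M)$ is its last column read top to bottom. Standard permutation of $w\in A^{n}$: let $f(w)$ be the letters of $w$ rearranged in nondecreasing order; for each letter $a$, $\pi_{a}$ is the unique order-preserving injective partial map on $[n]$ whose domain is the set of positions of $a$ in $f(w)$ and whose range is the set of positions of $a$ in $w$ (positions indexed from $0$; $\pi_a$ is empty if $a$ does not occur in $w$); $\pi(w)=\bigcup_{a}\pi_{a}$. For primitive $u$, $\langle u\rangle=\{u^{m}:m\ge1\}$, $\rho_{u}$ is the syntactic congruence of $\langle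 u\rangle$ on $A^{+}$ ($x\rho_{u}y$ iff for all $p,q\in A^{*}$: $pxq\in\langle u\rangle\Leftrightarrow pyq\in\langle u\rangle$), and $S_{u}=A^{+}/\rho_{u}$. A subdirect product of semigroups $S_{1},\dots,S_{t}$ is a subsemigroup of $S_{1}\times\cdots\times S_{t}$ whose projection onto each factor is surjective. *)

theory Defs
  imports Main "HOL-Library.List_Lexorder"
begin

definition word_pow :: "'a list \<Rightarrow> nat \<Rightarrow> 'a list" where
  "word_pow v k = concat (replicate k v)"

definition primitive :: "'a list \<Rightarrow> bool" where
  "primitive u \<longleftrightarrow> u \<noteq> [] \<and> \<not> (\<exists>v k. k \<ge> 2 \<and> u = word_pow v k)"

definition necklace :: "'a list \<Rightarrow> 'a list set" where
  "necklace u = {v. \<exists>x y. u = x @ y \<and> v = y @ x}"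

definition necklace_words :: "('a::linorder) list \<Rightarrow> 'a list list" where
  "necklace_words u = sorted_list_of_set (necklace u)"

(* the rows of the table T(M) for M = {n(u_1),...,n(u_t)} (with multiplicity),
   sorted lexicographically *)
definition bw_table :: "('a::linorder) list list \<Rightarrow> 'a list list" where
  "bw_table us =
     (let l = Lcm (set (map length us))
      in sort (concat (map (\<lambda>u. map (\<lambda>v. word_pow v (l div length v)) (necklace_words u)) us)))"

definition BW :: "('a::linorder) list list \<Rightarrow> 'a list" where
  "BW us = map last (bw_table us)"

definition positions :: "'a \<Rightarrow> 'a list \<Rightarrow> nat list" where
  "positions a w = filter (\<lambda>i. w ! i = a) [0..<length w]"

definition std_perm_letter :: "('a::linorder) list \<Rightarrow> 'a \<Rightarrow> (nat \<rightharpoonup> nat)" where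
  "std_perm_letter w a = map_of (zip (positions a (sort w)) (positions a w))"

definition POI :: "nat \<Rightarrow> (nat \<rightharpoonup> nat) set" where
  "POI n = {f. dom f \<subseteq> {..<n} \<and> ran f \<subseteq> {..<n} \<and> inj_on f (dom f) \<and>
               (\<forall>i\<in>dom f. \<forall>j\<in>dom f. i < j \<longrightarrow> the (f i) < the (f j))}"

(* composition of partial maps, left to right: x (f g) = (x f) g *)
definition pcomp :: "(nat \<rightharpoonup> nat) \<Rightarrow> (nat \<rightharpoonup> nat) \<Rightarrow> (nat \<rightharpoonup> nat)" where
  "pcomp f g = g \<circ>\<^sub>m f"

inductive_set gen_subsemigroup :: "('b \<Rightarrow> 'b \<Rightarrow> 'b) \<Rightarrow> 'b set \<Rightarrow> 'b set"
  for mult :: "'b \<Rightarrow> 'b \<Rightarrow> 'b" and X :: "'b set" where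
  base: "x \<in> X \<Longrightarrow> x \<in> gen_subsemigroup mult X"
| step: "x \<in> gen_subsemigroup mult X \<Longrightarrow> y \<in> gen_subsemigroup mult X \<Longrightarrow>
         mult x y \<in> gen_subsemigroup mult X"

definition SM :: "('a::{linorder,finite}) list list \<Rightarrow> (nat \<rightharpoonup> nat) set" where
  "SM us = gen_subsemigroup pcomp (range (std_perm_letter (BW us)))"

definition upowers :: "'a list \<Rightarrow> 'a list set" where
  "upowers u = {word_pow u m | m. m \<ge> 1}"

definition synt_cong :: "'a list \<Rightarrow> ('a list \<times> 'a list) set" where
  "synt_cong u = {(x, y). x \<noteq> [] \<and> y \<noteq> [] \<and>
      (\<forall>p q. p @ x @ q \<in> upowers u \<longleftrightarrow> p @ y @ q \<in> upowers u)}"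

definition synt_sg :: "'a list \<Rightarrow> 'a list set set" where
  "synt_sg u = {x. x \<noteq> []} // synt_cong u"

definition synt_mult :: "'a list \<Rightarrow> 'a list set \<Rightarrow> 'a list set \<Rightarrow> 'a list set" where
  "synt_mult u X Y = synt_cong u `` {x @ y | x y. x \<in> X \<and> y \<in> Y}"

definition prod_mult :: "'a list list \<Rightarrow> 'a list set list \<Rightarrow> 'a list set list \<Rightarrow> 'a list set list" where
  "prod_mult us xs ys = map (\<lambda>i. synt_mult (us ! i) (xs ! i) (ys ! i)) [0..<length us]"

definition subdirect_product :: "'a list list \<Rightarrow> 'a list set list set \<Rightarrow> bool" where
  "subdirect_product us T \<longleftrightarrow>
     T \<subseteq> {xs. length xs = length us \<and> (\<forall>i<length us. xs ! i \<in> synt_sg (us ! i))} \<and>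
     (\<forall>x\<in>T. \<forall>y\<in>T. prod_mult us x y \<in> T) \<and>
     (\<forall>i<length us. (\<lambda>xs. xs ! i) ` T = synt_sg (us ! i))"

definition sg_iso :: "'b set \<Rightarrow> ('b \<Rightarrow> 'b \<Rightarrow> 'b) \<Rightarrow> 'c set \<Rightarrow> ('c \<Rightarrow> 'c \<Rightarrow> 'c) \<Rightarrow> bool" where
  "sg_iso S m T m' \<longleftrightarrow> (\<exists>\<phi>. bij_betw \<phi> S T \<and> (\<forall>x\<in>S. \<forall>y\<in>S. \<phi> (m x y) = m' (\<phi> x) (\<phi> y)))"

end

theory Submission
  imports Defs "HOL-Library.Multiset"
begin

lemma mod_cancel_nat: assumes h: "((a::nat) + x) mod m = (a + y) mod m" shows "x mod m = y mod m"
proof (cases "m = 0")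
  case True then show ?thesis using h by simp
next
  case False
  have e: "z mod m = (((a + z) mod m) + (m - a mod m)) mod m" for z
  proof -
    have "z mod m = ((a mod m + z) + (m - a mod m)) mod m"
      using False by (simp add: less_imp_le)
    also have "\<dots> = (((a mod m + z) mod m) + (m - a mod m)) mod m" by (rule mod_add_left_eq[symmetric])
    also have "(a mod m + z) mod m = (a + z) mod m" by (simp add: mod_add_left_eq)
    finally show ?thesis .
  qed
  show ?thesis using e[of x] e[of y] h by simp
qed

lemma word_pow_Suc: "word_pow v (Suc k) = v @ word_pow v k"
  by (simp add: word_pow_def)

lemma word_pow_length[simp]: "length (word_pow v k) = k * length v"
  by (induction k) (auto simp: word_pow_Suc word_pow_def)

lemma word_pow_nth: "j < k * length v \<Longrightarrow> word_pow v k ! j = v ! (j mod length v)"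
proof (induction k arbitrary: j)
  case 0 then show ?case by simp
next
  case (Suc k)
  show ?case
  proof (cases "j < length v")
    case True then show ?thesis by (simp add: word_pow_Suc nth_append)
  next
    case False
    then have "j - length v < k * length v" using Suc.prems by auto
    then show ?thesis using False Suc.IH by (simp add: word_pow_Suc nth_append le_mod_geq)
  qed
qed

lemma prim_nonempty: "primitive u \<Longrightarrow> u \<noteq> []"
  by (simp add: primitive_def)

lemma prim_no_period:
  assumes pu: "primitive u" and d0: "0 < d" and dm: "d < length u"
    and per: "\<And>j. u ! ((j + d) mod length u) = u ! (j mod length u)"
  shows False
proof -
  define m where "m = length u"
  have m0: "m > 0" using dm m_def by auto
  have pert: "u ! ((j + t * d) mod m) = u ! (j mod m)" for t j
  proof (induction t)
    case 0 then show ?case by simp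
  next
    case (Suc t)
    have "u ! ((j + Suc t * d) mod m) = u ! (((j + t * d) + d) mod m)" by (simp add: algebra_simps)
    also have "\<dots> = u ! ((j + t * d) mod m)" using per m_def by simp
    finally show ?case using Suc by simp
  qed
  define g where "g = gcd d m"
  obtain x y where xy: "d * x = m * y + g" using bezout_nat[of d m] d0 g_def by auto
  have perg: "u ! ((j + g) mod m) = u ! (j mod m)" for j
  proof -
    have "(j + x * d) mod m = (j + g + m * y) mod m" using xy by (simp add: algebra_simps)
    also have "\<dots> = (j + g) mod m" by simp
    finally show ?thesis using pert[of j x] by simp
  qed
  have pergt: "u ! ((j + t * g) mod m) = u ! (j mod m)" for t j
  proof (induction t)
    case 0 then show ?case by simp
  next
    case (Suc t)
    have "u ! ((j + Suc t * g) mod m) = u ! (((j + t * g) + g) mod m)" by (simp add: algebra_simps)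
    also have "\<dots> = u ! ((j + t * g) mod m)" using perg by simp
    finally show ?case using Suc by simp
  qed
  have g0: "g > 0" using g_def d0 by simp
  have gd: "g \<le> d" using g_def d0 by (simp add: gcd_le1_nat)
  have gm: "g dvd m" using g_def by simp
  have gm': "g < m" using gd dm m_def by simp
  have "u = word_pow (take g u) (m div g)"
  proof (rule nth_equalityI)
    show "length u = length (word_pow (take g u) (m div g))"
      using gm gm' m_def by simp
  next
    fix j assume "j < length u"
    then have jm: "j < m" using m_def by simp
    have "u ! j = u ! ((j mod g + (j div g) * g) mod m)" using jm by simp
    also have "\<dots> = u ! ((j mod g) mod m)" by (rule pergt)
    also have "\<dots> = u ! (j mod g)" using gm' g0
      by (metis mod_less mod_less_divisor order.strict_trans)
    finally have 1: "u ! j = u ! (j mod g)" .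
    have "word_pow (take g u) (m div g) ! j = take g u ! (j mod g)"
      using word_pow_nth[of j "m div g" "take g u"] jm gm gm' m_def by simp
    also have "\<dots> = u ! (j mod g)" using g0 by simp
    finally show "u ! j = word_pow (take g u) (m div g) ! j" using 1 by simp
  qed
  moreover have "m div g \<ge> 2"
  proof (rule ccontr)
    assume "\<not> m div g \<ge> 2"
    then have "m div g \<le> 1" by simp
    then have "m \<le> g" using gm by (metis dvd_mult_div_cancel mult.commute mult_le_mono1 mult_1)
    then show False using gm' by simp
  qed
  ultimately show False using pu unfolding primitive_def by blast
qed

lemma rotate_eq_prim:
  assumes pu: "primitive u"
  shows "rotate a u = rotate b u \<longleftrightarrow> a mod length u = b mod length u"
proof
  assume "a mod length u = b mod length u"
  then show "rotate a u = rotate b u" by (metis rotate_conv_mod)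
next
  assume eq: "rotate a u = rotate b u"
  define m where "m = length u"
  have m0: "m > 0" using prim_nonempty[OF pu] m_def by simp
  have f: "u ! ((j + a) mod m) = u ! ((j + b) mod m)" for j
  proof -
    have "rotate a u ! (j mod m) = rotate b u ! (j mod m)" using eq by simp
    then have "u ! ((a + j mod m) mod m) = u ! ((b + j mod m) mod m)"
      using m0 m_def by (simp add: nth_rotate)
    then show ?thesis by (simp add: mod_add_right_eq add.commute)
  qed
  have key: False if lt: "a' < b'" and a'm: "b' < m"
     and h: "\<And>j. u ! ((j + a') mod m) = u ! ((j + b') mod m)" for a' b'
  proof (rule prim_no_period[OF pu, of "b' - a'"])
    show "0 < b' - a'" using lt by simp
    show "b' - a' < length u" using a'm m_def by simp
    fix j
    have "u ! (j mod m) = u ! (((j + m - a') + a') mod m)" using lt a'm by simp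
    also have "\<dots> = u ! (((j + m - a') + b') mod m)" by (rule h)
    also have "((j + m - a') + b') mod m = (j + (b' - a')) mod m"
    proof -
      have "(j + m - a') + b' = (j + (b' - a')) + m" using lt a'm by simp
      then show ?thesis by simp
    qed
    finally show "u ! ((j + (b' - a')) mod length u) = u ! (j mod length u)" using m_def by simp
  qed
  have h2: "u ! ((j + a mod m) mod m) = u ! ((j + b mod m) mod m)" for j
    using f[of j] by (simp add: mod_add_right_eq)
  show "a mod length u = b mod length u"
  proof (rule ccontr)
    assume ne: "a mod length u \<noteq> b mod length u"
    show False
    proof (cases "a mod m < b mod m")
      case True then show False using key[of "a mod m" "b mod m", OF True mod_less_divisor[OF m0] h2] by blast
    next
      case False
      then have "b mod m < a mod m" using ne m_def by simp
      then show False using key[of "b mod m" "a mod m", OF _ mod_less_divisor[OF m0]] h2 by metis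
    qed
  qed
qed

definition rd :: "'a list \<Rightarrow> nat \<Rightarrow> 'a list \<Rightarrow> bool" where
  "rd u c x \<longleftrightarrow> (\<forall>i<length x. x ! i = u ! ((c + i) mod length u))"

lemma rd_Nil[simp]: "rd u c []" by (simp add: rd_def)

lemma rd_append: "rd u c (xs @ ys) \<longleftrightarrow> rd u c xs \<and> rd u (c + length xs) ys"
  unfolding rd_def
proof (intro iffI conjI allI impI)
  fix i
  assume h: "\<forall>i<length (xs @ ys). (xs @ ys) ! i = u ! ((c + i) mod length u)"
  { assume "i < length xs" then show "xs ! i = u ! ((c + i) mod length u)"
      using h[rule_format, of i] by (simp add: nth_append) }
  { assume "i < length ys" then show "ys ! i = u ! ((c + length xs + i) mod length u)"
      using h[rule_format, of "length xs + i"] by (simp add: nth_append add.assoc) }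
next
  fix i
  assume h: "(\<forall>i<length xs. xs ! i = u ! ((c + i) mod length u)) \<and>
    (\<forall>i<length ys. ys ! i = u ! ((c + length xs + i) mod length u))"
    and i: "i < length (xs @ ys)"
  show "(xs @ ys) ! i = u ! ((c + i) mod length u)"
  proof (cases "i < length xs")
    case True then show ?thesis using h by (simp add: nth_append)
  next
    case False
    then show ?thesis using h i by (auto simp: nth_append)
  qed
qed

lemma rd_Cons: "rd u c (a # x) \<longleftrightarrow> u ! (c mod length u) = a \<and> rd u (Suc c) x"
  using rd_append[of u c "[a]" x] by (auto simp: rd_def)

lemma rd_mod: "rd u (c mod length u) x = rd u c x"
  by (simp add: rd_def mod_add_left_eq)

lemma upowers_iff:
  assumes "u \<noteq> []"
  shows "z \<in> upowers u \<longleftrightarrow> z \<noteq> [] \<and> length z mod length u = 0 \<and> rd u 0 z"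
proof
  assume "z \<in> upowers u"
  then obtain k where k: "k \<ge> 1" "z = word_pow u k" by (auto simp: upowers_def)
  have lz: "length z = k * length u" using k by simp
  then have "length z > 0" using k(1) assms by simp
  then have "z \<noteq> []" by auto
  moreover have "rd u 0 z" unfolding rd_def using k lz by (simp add: word_pow_nth)
  ultimately show "z \<noteq> [] \<and> length z mod length u = 0 \<and> rd u 0 z" using lz by simp
next
  assume h: "z \<noteq> [] \<and> length z mod length u = 0 \<and> rd u 0 z"
  define k where "k = length z div length u"
  have lz: "length z = k * length u" using h k_def by auto
  then have "k \<ge> 1" using h by (cases k) auto
  moreover have "z = word_pow u k"
    by (rule nth_equalityI) (use lz h in \<open>auto simp: word_pow_nth rd_def\<close>)
  ultimately show "z \<in> upowers u" by (auto simp: upowers_def)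
qed

lemma mod_mid_cong: "(x::nat) mod m = y mod m \<Longrightarrow> (a + x + b) mod m = (a + y + b) mod m"
  by (rule mod_add_cong[OF mod_add_cong[OF refl] refl])

lemma pxq_iff:
  assumes "u \<noteq> []" "x \<noteq> []"
  shows "p @ x @ q \<in> upowers u \<longleftrightarrow>
    (length p + length x + length q) mod length u = 0 \<and> rd u 0 p \<and> rd u (length p) x \<and>
    rd u (length p + length x) q"
  using assms by (auto simp: upowers_iff rd_append add.assoc)

lemma cong_dir:
  assumes u: "u \<noteq> []" and x: "x \<noteq> []" and y: "y \<noteq> []"
    and h1: "\<forall>c. rd u c x \<longleftrightarrow> rd u c y"
    and h2: "\<forall>c. rd u c x \<longrightarrow> length x mod length u = length y mod length u"
    and pq: "p @ x @ q \<in> upowers u"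
  shows "p @ y @ q \<in> upowers u"
proof -
  have a: "(length p + length x + length q) mod length u = 0" "rd u 0 p" "rd u (length p) x"
    "rd u (length p + length x) q" using pq pxq_iff[OF u x] by auto
  have ry: "rd u (length p) y" using a h1 by auto
  have lm: "length x mod length u = length y mod length u" using a h2 by auto
  have "(length p + length y + length q) mod length u = 0"
    using a(1) mod_mid_cong[OF lm, of "length p" "length q"] by simp
  moreover have "rd u (length p + length y) q"
  proof -
    have "(length p + length y) mod length u = (length p + length x) mod length u"
      using mod_mid_cong[OF lm, of "length p" 0] by simp
    then show ?thesis using a(4) by (metis rd_mod)
  qed
  ultimately show ?thesis using pxq_iff[OF u y] a ry by auto
qed

lemma synt_cong_iff:
  assumes u: "u \<noteq> []" and x: "x \<noteq> []" and y: "y \<noteq> []"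
  shows "(x, y) \<in> synt_cong u \<longleftrightarrow>
    (\<forall>c. rd u c x \<longleftrightarrow> rd u c y) \<and> (\<forall>c. rd u c x \<longrightarrow> length x mod length u = length y mod length u)"
proof
  assume h: "(\<forall>c. rd u c x \<longleftrightarrow> rd u c y) \<and> (\<forall>c. rd u c x \<longrightarrow> length x mod length u = length y mod length u)"
  have h': "(\<forall>c. rd u c y \<longleftrightarrow> rd u c x) \<and> (\<forall>c. rd u c y \<longrightarrow> length y mod length u = length x mod length u)"
    using h by metis
  show "(x, y) \<in> synt_cong u"
    unfolding synt_cong_def using x y cong_dir[OF u x y] cong_dir[OF u y x] h h' by blast
next
  define m where "m = length u"
  have m0: "m > 0" using u m_def by simp
  have one: "rd u c y \<and> length x mod m = length y mod m"
    if r: "(x, y) \<in> synt_cong u" and x: "x \<noteq> []" and y: "y \<noteq> []" and c: "rd u c x" for x y c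
  proof -
    define p where "p = map (\<lambda>i. u ! (i mod m)) [0..<c]"
    define L where "L = m - (c + length x) mod m"
    define q where "q = map (\<lambda>i. u ! ((c + length x + i) mod m)) [0..<L]"
    have lp: "length p = c" and lq: "length q = L" by (simp_all add: p_def q_def)
    have rp: "rd u 0 p" by (simp add: rd_def p_def m_def)
    have rq: "rd u (c + length x) q" by (simp add: rd_def q_def m_def)
    have mL: "(c + length x + L) mod m = 0"
    proof -
      have "(c + length x + L) mod m = ((c + length x) mod m + L) mod m" by (simp add: mod_add_left_eq)
      also have "(c + length x) mod m + L = m" using m0 L_def by (simp add: less_imp_le)
      finally show ?thesis by simp
    qed
    have "p @ x @ q \<in> upowers u"
      using pxq_iff[OF u x] lp lq rp rq mL c m_def by simp
    then have "p @ y @ q \<in> upowers u" using r unfolding synt_cong_def by blast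
    then have 2: "(c + length y + L) mod m = 0" "rd u c y"
      using pxq_iff[OF u y] lp lq m_def by auto
    have "((c + L) + length x) mod m = ((c + L) + length y) mod m"
      using mL 2(1) by (simp add: add_ac)
    then show ?thesis using 2 mod_cancel_nat by blast
  qed
  assume r: "(x, y) \<in> synt_cong u"
  then have r': "(y, x) \<in> synt_cong u" unfolding synt_cong_def by blast
  show "(\<forall>c. rd u c x \<longleftrightarrow> rd u c y) \<and> (\<forall>c. rd u c x \<longrightarrow> length x mod length u = length y mod length u)"
    using one[OF r x y] one[OF r' y x] m_def by blast
qed

lemma card_filter_mset: "card {k. k < length R \<and> P (R ! k)} = size (filter_mset P (mset R))"
  by (metis length_filter_conv_card mset_filter size_mset)

lemma exists_rank:
  fixes N :: nat shows "k < card {j. j < N \<and> P j} \<Longrightarrow> \<exists>j<N. P j \<and> card {j'. j' < j \<and> P j'} = k"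
proof (induction N)
  case 0 then show ?case by simp
next
  case (Suc N)
  show ?case
  proof (cases "k < card {j. j < N \<and> P j}")
    case True then show ?thesis using Suc.IH by (meson less_SucI)
  next
    case False
    have eq: "{j. j < Suc N \<and> P j} = {j. j < N \<and> P j} \<union> (if P N then {N} else {})"
      by (auto simp: less_Suc_eq)
    have "card {j. j < Suc N \<and> P j} = card {j. j < N \<and> P j} + (if P N then 1 else 0)"
      unfolding eq by (auto simp: card_Un_disjoint)
    then have "P N" "k = card {j. j < N \<and> P j}" using Suc.prems False
      by (auto split: if_splits)
    then show ?thesis by auto
  qed
qed

lemma nth_filter_card:
  assumes "P j" "j < N"
  shows "filter P [0..<N] ! card {j'. j' < j \<and> P j'} = j"
proof -
  have s1: "[0..<N] = [0..<j] @ [j..<N]" using upt_add_eq_append[of 0 j "N - j"] assms(2) by simp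
  have s2: "[j..<N] = j # [Suc j..<N]" using assms(2) by (simp add: upt_conv_Cons)
  have split: "[0..<N] = [0..<j] @ j # [Suc j..<N]" using s1 s2 by simp
  have "{i. i < j \<and> P ([0..<j] ! i)} = {j'. j' < j \<and> P j'}" by auto
  then have "length (filter P [0..<j]) = card {j'. j' < j \<and> P j'}"
    by (simp add: length_filter_conv_card)
  then show ?thesis using assms(1) unfolding split by (simp add: nth_append)
qed

lemma app_less:
  "length s' = length s \<Longrightarrow> (s' @ t1 < s @ t2) \<longleftrightarrow> (s' < s \<or> s' = s \<and> t1 < t2)"
proof (induction s' arbitrary: s)
  case Nil then show ?case by simp
next
  case (Cons b s')
  then obtain c s0 where s: "s = c # s0" "length s' = length s0" by (cases s) auto
  then show ?case using Cons.IH[OF s(2)] by auto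
qed

lemma cons_le_hd: "(a # s :: ('a::linorder) list) \<le> b # s' \<Longrightarrow> a \<le> b"
proof -
  assume h: "a # s \<le> b # s'"
  then have "a # s < b # s' \<or> a # s = b # s'" by (rule order.order_iff_strict[THEN iffD1])
  then show "a \<le> b" unfolding Cons_less_Cons by auto
qed

locale bwt =
  fixes R :: "('a::linorder) list list" and L :: nat
  assumes sR: "sorted R" and lenR: "\<And>r. r \<in> set R \<Longrightarrow> length r = L" and L0: "L > 0"
    and rotR: "mset (map rotate1 R) = mset R"
begin

definition occ :: "nat \<Rightarrow> nat" where
  "occ i = card {k. k < i \<and> R ! k = R ! i}"

lemma nonemptyR: "r \<in> set R \<Longrightarrow> r \<noteq> []"
  using lenR L0 by fastforce

lemma cnt_split:
  assumes i: "i < length R" and Q: "Q (R ! i)"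
  shows "card {k. k < i \<and> Q (R ! k)} =
    card {k. k < length R \<and> R ! k < R ! i \<and> Q (R ! k)} + occ i"
proof -
  have eq: "{k. k < i \<and> Q (R ! k)} =
    {k. k < length R \<and> R ! k < R ! i \<and> Q (R ! k)} \<union> {k. k < i \<and> R ! k = R ! i}"
  proof (intro set_eqI iffI)
    fix k assume "k \<in> {k. k < i \<and> Q (R ! k)}"
    then have k: "k < i" "Q (R ! k)" by auto
    then have "R ! k \<le> R ! i" using sorted_nth_mono[OF sR, of k i] i by simp
    then show "k \<in> {k. k < length R \<and> R ! k < R ! i \<and> Q (R ! k)} \<union> {k. k < i \<and> R ! k = R ! i}"
      using k i by auto
  next
    fix k assume "k \<in> {k. k < length R \<and> R ! k < R ! i \<and> Q (R ! k)} \<union> {k. k < i \<and> R ! k = R ! i}"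
    then show "k \<in> {k. k < i \<and> Q (R ! k)}"
    proof
      assume k: "k \<in> {k. k < length R \<and> R ! k < R ! i \<and> Q (R ! k)}"
      have "k < i"
      proof (rule ccontr)
        assume "\<not> k < i"
        then have "R ! i \<le> R ! k" using sorted_nth_mono[OF sR, of i k] k by simp
        then show False using k leD by blast
      qed
      then show ?thesis using k by simp
    next
      assume "k \<in> {k. k < i \<and> R ! k = R ! i}" then show ?thesis using Q by simp
    qed
  qed
  show ?thesis unfolding eq occ_def
    by (rule card_Un_disjoint) auto
qed

lemma size_rot:
  "size (filter_mset P (mset R)) = size (filter_mset (\<lambda>t. P (rotate1 t)) (mset R))"
proof -
  have "filter_mset P (mset R) = filter_mset P (image_mset rotate1 (mset R))"
    using rotR by simp
  also have "\<dots> = image_mset rotate1 (filter_mset (\<lambda>t. P (rotate1 t)) (mset R))"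
    by (rule filter_mset_image_mset)
  finally show ?thesis by simp
qed

lemma card_rot:
  "card {k. k < length R \<and> R ! k = rotate1 r} = card {k. k < length R \<and> R ! k = r}"
proof -
  have "card {k. k < length R \<and> R ! k = rotate1 r} = size (filter_mset (\<lambda>t. t = rotate1 r) (mset R))"
    by (rule card_filter_mset)
  also have "\<dots> = size (filter_mset (\<lambda>t. rotate1 t = rotate1 r) (mset R))" by (rule size_rot)
  also have "(\<lambda>t. rotate1 t = rotate1 r) = (\<lambda>t. t = r)"
    using inj_rotate1 by (auto dest: injD)
  also have "size (filter_mset (\<lambda>t. t = r) (mset R)) = card {k. k < length R \<and> R ! k = r}"
    by (rule card_filter_mset[symmetric])
  finally show ?thesis .
qed

lemma occ_less: "i < length R \<Longrightarrow> occ i < card {k. k < length R \<and> R ! k = R ! i}"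
  unfolding occ_def by (rule psubset_card_mono) auto

lemma occ_uniq:
  assumes "j1 < length R" "j2 < length R" "R ! j1 = R ! j2" "occ j1 = occ j2"
  shows "j1 = j2"
proof (rule ccontr)
  have lt: False if "a < b" "b < length R" "R ! a = R ! b" "occ a = occ b" for a b
  proof -
    have "{k. k < a \<and> R ! k = R ! a} \<subset> {k. k < b \<and> R ! k = R ! b}"
      using that by auto
    moreover have "finite {k. k < b \<and> R ! k = R ! b}" by simp
    ultimately have "occ a < occ b" unfolding occ_def using psubset_card_mono by blast
    then show False using that by simp
  qed
  assume "j1 \<noteq> j2"
  then show False using lt[of j1 j2] lt[of j2 j1] assms by (cases "j1 < j2") auto
qed

lemma size_hd_last:
  assumes r: "a # s \<in> set R"
  shows "size (filter_mset (\<lambda>t. t < a # s \<and> hd t = a) (mset R)) =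
         size (filter_mset (\<lambda>t. t < s @ [a] \<and> last t = a) (mset R))"
proof -
  have "size (filter_mset (\<lambda>t. t < s @ [a] \<and> last t = a) (mset R)) =
        size (filter_mset (\<lambda>t. rotate1 t < s @ [a] \<and> last (rotate1 t) = a) (mset R))"
    by (rule size_rot)
  also have "filter_mset (\<lambda>t. rotate1 t < s @ [a] \<and> last (rotate1 t) = a) (mset R) =
             filter_mset (\<lambda>t. t < a # s \<and> hd t = a) (mset R)"
  proof (rule filter_mset_cong0)
    fix t assume "t \<in># mset R"
    then have t: "t \<in> set R" by simp
    obtain b s' where bs: "t = b # s'" using nonemptyR[OF t] by (meson neq_Nil_conv)
    have "length s' = length s" using lenR[OF t] lenR[OF r] bs by simp
    then show "(rotate1 t < s @ [a] \<and> last (rotate1 t) = a) = (t < a # s \<and> hd t = a)"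
      using bs app_less[of s' s "[a]" "[a]"] by auto
  qed
  finally show ?thesis by (rule sym)
qed

lemma sort_last: "sort (map last R) = map hd R"
proof (rule properties_for_sort)
  have "mset (map last R) = image_mset last (mset R)" by simp
  also have "\<dots> = image_mset last (image_mset rotate1 (mset R))" using rotR by simp
  also have "\<dots> = image_mset (\<lambda>t. last (rotate1 t)) (mset R)" by (simp add: image_mset.compositionality comp_def)
  also have "\<dots> = image_mset hd (mset R)"
  proof (rule image_mset_cong)
    fix t assume "t \<in># mset R"
    then have "t \<noteq> []" using nonemptyR by simp
    then obtain b s where "t = b # s" by (cases t) auto
    then show "last (rotate1 t) = hd t" by simp
  qed
  finally show "mset (map hd R) = mset (map last R)" by simp
next
  show "sorted (map hd R)"
    unfolding sorted_iff_nth_mono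
  proof (intro allI impI)
    fix i j assume ij: "i \<le> j" "j < length (map hd R)"
    then have le: "R ! i \<le> R ! j" using sorted_nth_mono[OF sR] by simp
    have "R ! i \<noteq> []" "R ! j \<noteq> []" using nonemptyR ij by auto
    then obtain a s b s' where "R ! i = a # s" "R ! j = b # s'" by (meson neq_Nil_conv)
    then show "map hd R ! i \<le> map hd R ! j" using le ij cons_le_hd by auto
  qed
qed

end

lemma len_filter_upt: "length (filter P [0..<N]) = card {i. i < N \<and> P i}"
proof -
  have "{i. i < length [0..<N] \<and> P ([0..<N] ! i)} = {i. i < N \<and> P i}" by auto
  then show ?thesis by (simp add: length_filter_conv_card)
qed

context bwt
begin

lemma pos_sort: "positions a (sort (map last R)) = filter (\<lambda>i. hd (R ! i) = a) [0..<length R]"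
  unfolding positions_def sort_last by (rule filter_cong) auto

lemma pos_w: "positions a (map last R) = filter (\<lambda>i. last (R ! i) = a) [0..<length R]"
  unfolding positions_def by (rule filter_cong) auto

lemma card_hd_last:
  "card {i. i < length R \<and> hd (R ! i) = a} = card {i. i < length R \<and> last (R ! i) = a}"
proof -
  have "card {i. i < length R \<and> hd (R ! i) = a} = size (filter_mset (\<lambda>t. hd t = a) (mset R))"
    by (rule card_filter_mset[of R "\<lambda>t. hd t = a"])
  also have "filter_mset (\<lambda>t. hd t = a) (mset R) = filter_mset (\<lambda>t. last (rotate1 t) = a) (mset R)"
  proof (rule filter_mset_cong0)
    fix t assume "t \<in># mset R"
    then have "t \<noteq> []" using nonemptyR by simp
    then obtain b s where "t = b # s" by (meson neq_Nil_conv)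
    then show "(hd t = a) = (last (rotate1 t) = a)" by simp
  qed
  also have "size \<dots> = size (filter_mset (\<lambda>t. last t = a) (mset R))"
    by (rule size_rot[symmetric])
  also have "\<dots> = card {i. i < length R \<and> last (R ! i) = a}"
    by (rule card_filter_mset[of R "\<lambda>t. last t = a", symmetric])
  finally show ?thesis .
qed

lemma LF1:
  assumes i: "i < length R" and a: "hd (R ! i) = a"
  shows "\<exists>j. std_perm_letter (map last R) a i = Some j \<and> j < length R \<and>
             R ! j = rotate1 (R ! i) \<and> occ j = occ i"
proof -
  define N where "N = length R"
  have iN: "i < N" using i N_def by simp
  have "R ! i \<noteq> []" using nonemptyR i by simp
  then obtain s where Ri: "R ! i = a # s" using a by (metis list.collapse)
  have RiR: "a # s \<in> set R" using Ri i by (metis nth_mem)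
  define r' where "r' = s @ [a]"
  have r'rot: "r' = rotate1 (R ! i)" using Ri r'_def by simp
  have "occ i < card {k. k < N \<and> R ! k = r'}"
    using occ_less[OF i] card_rot[of "R ! i"] r'rot N_def by simp
  then obtain j where j: "j < N" "R ! j = r'" "card {j'. j' < j \<and> R ! j' = r'} = occ i"
    using exists_rank[of "occ i" N "\<lambda>k. R ! k = r'"] by auto
  have occj: "occ j = occ i" using j unfolding occ_def by simp
  define P1 where "P1 = filter (\<lambda>i. hd (R ! i) = a) [0..<N]"
  define Q1 where "Q1 = filter (\<lambda>i. last (R ! i) = a) [0..<N]"
  define ki where "ki = card {k. k < i \<and> hd (R ! k) = a}"
  define kj where "kj = card {k. k < j \<and> last (R ! k) = a}"
  have P1i: "P1 ! ki = i" unfolding P1_def ki_def by (rule nth_filter_card) (use a iN in auto)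
  have lastj: "last (R ! j) = a" using j r'_def by simp
  have Q1j: "Q1 ! kj = j" unfolding Q1_def kj_def by (rule nth_filter_card) (use lastj j in auto)
  have "ki = card {k. k < N \<and> R ! k < R ! i \<and> hd (R ! k) = a} + occ i"
    unfolding ki_def N_def by (rule cnt_split[OF i, of "\<lambda>t. hd t = a"]) (use a in simp)
  also have "card {k. k < N \<and> R ! k < R ! i \<and> hd (R ! k) = a} =
             size (filter_mset (\<lambda>t. t < a # s \<and> hd t = a) (mset R))"
    unfolding N_def Ri by (rule card_filter_mset[of R "\<lambda>t. t < a # s \<and> hd t = a"])
  also have "\<dots> = size (filter_mset (\<lambda>t. t < s @ [a] \<and> last t = a) (mset R))"
    by (rule size_hd_last[OF RiR])
  also have "\<dots> = card {k. k < N \<and> R ! k < R ! j \<and> last (R ! k) = a}"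
    unfolding N_def j(2) r'_def by (rule card_filter_mset[of R "\<lambda>t. t < s @ [a] \<and> last t = a", symmetric])
  also have "\<dots> + occ i = kj"
    unfolding kj_def N_def occj[symmetric] by (rule cnt_split[symmetric]) (use j N_def lastj in auto)
  finally have kk: "ki = kj" .
  have lenPQ: "length P1 = length Q1"
    unfolding P1_def Q1_def len_filter_upt N_def by (rule card_hd_last)
  have "ki < length P1"
  proof -
    have "{k. k < i \<and> hd (R ! k) = a} \<subset> {k. k < N \<and> hd (R ! k) = a}"
      using iN a by auto
    moreover have "finite {k. k < N \<and> hd (R ! k) = a}" by simp
    ultimately have "ki < card {k. k < N \<and> hd (R ! k) = a}"
      unfolding ki_def using psubset_card_mono by blast
    then show ?thesis unfolding P1_def len_filter_upt .
  qed
  moreover have "distinct P1" unfolding P1_def by simp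
  ultimately have "map_of (zip P1 Q1) (P1 ! ki) = Some (Q1 ! ki)"
    using map_of_zip_nth[OF lenPQ] lenPQ by simp
  then have "std_perm_letter (map last R) a i = Some j"
    unfolding std_perm_letter_def pos_sort pos_w P1_def[symmetric, unfolded N_def]
      Q1_def[symmetric, unfolded N_def]
    using P1i Q1j kk by simp
  then show ?thesis using j r'rot occj N_def by auto
qed

lemma LF0:
  assumes "\<not> (i < length R \<and> hd (R ! i) = a)"
  shows "std_perm_letter (map last R) a i = None"
proof -
  have "length (filter (\<lambda>i. hd (R ! i) = a) [0..<length R]) =
        length (filter (\<lambda>i. last (R ! i) = a) [0..<length R])"
    unfolding len_filter_upt by (rule card_hd_last)
  then show ?thesis unfolding std_perm_letter_def pos_sort pos_w
    by (subst map_of_zip_is_None) (use assms in auto)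
qed

end

fun ppow :: "('a::linorder) list \<Rightarrow> 'a list \<Rightarrow> (nat \<rightharpoonup> nat)" where
  "ppow w [] = Some"
| "ppow w (a # x) = pcomp (std_perm_letter w a) (ppow w x)"

lemma pcomp_Some_right[simp]: "pcomp f Some = f"
  by (rule ext) (simp add: pcomp_def map_comp_def split: option.split)

lemma pcomp_Some_left[simp]: "pcomp Some g = g"
  by (rule ext) (simp add: pcomp_def map_comp_def)

lemma pcomp_assoc: "pcomp (pcomp f g) h = pcomp f (pcomp g h)"
  by (rule ext) (simp add: pcomp_def map_comp_def split: option.split)

lemma ppow_append: "ppow w (x @ y) = pcomp (ppow w x) (ppow w y)"
  by (induction x) (simp_all add: pcomp_assoc)

lemma ppow_single: "ppow w [a] = std_perm_letter w a"
  by simp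

lemma SM_eq: "SM us = ppow (BW us) ` {x. x \<noteq> []}"
proof
  show "SM us \<subseteq> ppow (BW us) ` {x. x \<noteq> []}"
  proof
    fix f assume "f \<in> SM us"
    then show "f \<in> ppow (BW us) ` {x. x \<noteq> []}"
      unfolding SM_def
    proof (induction rule: gen_subsemigroup.induct)
      case (base x)
      then obtain a where "x = std_perm_letter (BW us) a" by auto
      then have "x = ppow (BW us) [a]" by simp
      then show ?case by blast
    next
      case (step x y)
      then obtain x' y' where "x' \<noteq> []" "y' \<noteq> []" "x = ppow (BW us) x'" "y = ppow (BW us) y'"
        by blast
      then have "pcomp x y = ppow (BW us) (x' @ y')" "x' @ y' \<noteq> []" by (simp_all add: ppow_append)
      then show ?case by blast
    qed
  qed
next
  show "ppow (BW us) ` {x. x \<noteq> []} \<subseteq> SM us"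
  proof
    fix f assume "f \<in> ppow (BW us) ` {x. x \<noteq> []}"
    then obtain x where x: "x \<noteq> []" "f = ppow (BW us) x" by blast
    have "ppow (BW us) x \<in> SM us" using x(1)
    proof (induction x)
      case Nil then show ?case by simp
    next
      case (Cons a x)
      have ga: "std_perm_letter (BW us) a \<in> SM us"
        unfolding SM_def by (rule gen_subsemigroup.base) simp
      show ?case
      proof (cases "x = []")
        case True then show ?thesis using ga by simp
      next
        case False
        then have "ppow (BW us) x \<in> SM us" using Cons.IH by simp
        then show ?thesis using ga unfolding SM_def
          by (simp add: gen_subsemigroup.step)
      qed
    qed
    then show "f \<in> SM us" using x by simp
  qed
qed

lemma rd_rotate1: "r \<noteq> [] \<Longrightarrow> rd (rotate1 r) c x = rd r (Suc c) x"
  unfolding rd_def by (simp add: nth_rotate1 mod_Suc_eq)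

context bwt
begin

lemma ppow_sem:
  "(i < length R \<and> rd (R ! i) 0 x \<longrightarrow>
     (\<exists>j. ppow (map last R) x i = Some j \<and> j < length R \<and>
          R ! j = rotate (length x) (R ! i) \<and> occ j = occ i)) \<and>
   (i < length R \<and> \<not> rd (R ! i) 0 x \<longrightarrow> ppow (map last R) x i = None)"
proof (induction x arbitrary: i)
  case Nil then show ?case by simp
next
  case (Cons a x)
  have pc: "ppow (map last R) (a # x) i =
      (case std_perm_letter (map last R) a i of None \<Rightarrow> None | Some k \<Rightarrow> ppow (map last R) x k)"
    by (simp add: pcomp_def map_comp_def)
  show ?case
  proof (intro conjI impI)
    assume h: "i < length R \<and> rd (R ! i) 0 (a # x)"
    have ne: "R ! i \<noteq> []" using h nonemptyR by simp
    have hd: "hd (R ! i) = a" and rx: "rd (rotate1 (R ! i)) 0 x"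
      using h ne by (simp_all add: rd_Cons rd_rotate1 hd_conv_nth)
    obtain k where k: "std_perm_letter (map last R) a i = Some k" "k < length R"
      "R ! k = rotate1 (R ! i)" "occ k = occ i" using LF1[of i a] h hd by blast
    obtain j where j: "ppow (map last R) x k = Some j" "j < length R"
      "R ! j = rotate (length x) (R ! k)" "occ j = occ k"
      using Cons.IH[of k] k rx by auto
    have "rotate (length x) (R ! k) = rotate (length (a # x)) (R ! i)"
      using k(3) by (simp add: rotate1_rotate_swap)
    then show "\<exists>j. ppow (map last R) (a # x) i = Some j \<and> j < length R \<and>
          R ! j = rotate (length (a # x)) (R ! i) \<and> occ j = occ i"
      using pc k j by auto
  next
    assume h: "i < length R \<and> \<not> rd (R ! i) 0 (a # x)"
    have ne: "R ! i \<noteq> []" using h nonemptyR by simp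
    show "ppow (map last R) (a # x) i = None"
    proof (cases "hd (R ! i) = a")
      case False
      then show ?thesis using pc LF0[of i a] by simp
    next
      case True
      then have rx: "\<not> rd (rotate1 (R ! i)) 0 x"
        using h ne by (simp add: rd_Cons rd_rotate1 hd_conv_nth)
      obtain k where k: "std_perm_letter (map last R) a i = Some k" "k < length R"
        "R ! k = rotate1 (R ! i)" "occ k = occ i" using LF1[of i a] h True by blast
      then have "ppow (map last R) x k = None" using Cons.IH[of k] rx by auto
      then show ?thesis using pc k by simp
    qed
  qed
qed

lemma ppow_out:
  assumes "x \<noteq> []" "\<not> i < length R"
  shows "ppow (map last R) x i = None"
proof -
  obtain a x' where x: "x = a # x'" using assms(1) by (cases x) auto
  show ?thesis using x LF0[of i a] assms(2) by (simp add: pcomp_def map_comp_def)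
qed

lemma ppow_eq_iff:
  assumes x: "x \<noteq> []" and y: "y \<noteq> []"
  shows "ppow (map last R) x = ppow (map last R) y \<longleftrightarrow>
    (\<forall>i<length R. (rd (R ! i) 0 x \<longleftrightarrow> rd (R ! i) 0 y) \<and>
       (rd (R ! i) 0 x \<longrightarrow> rotate (length x) (R ! i) = rotate (length y) (R ! i)))"
proof
  assume eq: "ppow (map last R) x = ppow (map last R) y"
  show "\<forall>i<length R. (rd (R ! i) 0 x \<longleftrightarrow> rd (R ! i) 0 y) \<and>
       (rd (R ! i) 0 x \<longrightarrow> rotate (length x) (R ! i) = rotate (length y) (R ! i))"
  proof (intro allI impI conjI)
    fix i assume i: "i < length R"
    have sx: "ppow (map last R) x i \<noteq> None \<longleftrightarrow> rd (R ! i) 0 x"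
      using ppow_sem[of i x] i by auto
    have sy: "ppow (map last R) y i \<noteq> None \<longleftrightarrow> rd (R ! i) 0 y"
      using ppow_sem[of i y] i by auto
    show "rd (R ! i) 0 x \<longleftrightarrow> rd (R ! i) 0 y" using sx sy eq by simp
    assume rx: "rd (R ! i) 0 x"
    then have ry: "rd (R ! i) 0 y" using sx sy eq by simp
    obtain j where j: "ppow (map last R) x i = Some j" "R ! j = rotate (length x) (R ! i)"
      using ppow_sem[of i x] i rx by auto
    obtain j' where j': "ppow (map last R) y i = Some j'" "R ! j' = rotate (length y) (R ! i)"
      using ppow_sem[of i y] i ry by auto
    show "rotate (length x) (R ! i) = rotate (length y) (R ! i)" using j j' eq by simp
  qed
next
  assume h: "\<forall>i<length R. (rd (R ! i) 0 x \<longleftrightarrow> rd (R ! i) 0 y) \<and>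
       (rd (R ! i) 0 x \<longrightarrow> rotate (length x) (R ! i) = rotate (length y) (R ! i))"
  show "ppow (map last R) x = ppow (map last R) y"
  proof (rule ext)
    fix i
    show "ppow (map last R) x i = ppow (map last R) y i"
    proof (cases "i < length R")
      case False then show ?thesis using ppow_out x y by simp
    next
      case i: True
      show ?thesis
      proof (cases "rd (R ! i) 0 x")
        case rx: True
        then have ry: "rd (R ! i) 0 y" and rot: "rotate (length x) (R ! i) = rotate (length y) (R ! i)"
          using h i by auto
        obtain j where j: "ppow (map last R) x i = Some j" "j < length R"
           "R ! j = rotate (length x) (R ! i)" "occ j = occ i"
          using ppow_sem[of i x] i rx by auto
        obtain j' where j': "ppow (map last R) y i = Some j'" "j' < length R"
           "R ! j' = rotate (length y) (R ! i)" "occ j' = occ i"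
          using ppow_sem[of i y] i ry by auto
        have "j = j'" by (rule occ_uniq) (use j j' rot in auto)
        then show ?thesis using j j' by simp
      next
        case rx: False
        then have "\<not> rd (R ! i) 0 y" using h i by auto
        then show ?thesis using ppow_sem[of i x] ppow_sem[of i y] i rx by auto
      qed
    qed
  qed
qed

end

lemma necklace_rot:
  assumes "u \<noteq> []"
  shows "necklace u = (\<lambda>k. rotate k u) ` {..<length u}"
proof
  show "necklace u \<subseteq> (\<lambda>k. rotate k u) ` {..<length u}"
  proof
    fix v assume "v \<in> necklace u"
    then obtain x y where xy: "u = x @ y" "v = y @ x" by (auto simp: necklace_def)
    have "v = rotate (length x) u" using xy by (simp add: rotate_append)
    also have "\<dots> = rotate (length x mod length u) u" by (rule rotate_conv_mod)
    finally show "v \<in> (\<lambda>k. rotate k u) ` {..<length u}" using assms by auto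
  qed
next
  show "(\<lambda>k. rotate k u) ` {..<length u} \<subseteq> necklace u"
  proof
    fix v assume "v \<in> (\<lambda>k. rotate k u) ` {..<length u}"
    then obtain k where k: "k < length u" "v = rotate k u" by auto
    then have "v = drop k u @ take k u" by (simp add: rotate_drop_take)
    moreover have "u = take k u @ drop k u" by simp
    ultimately show "v \<in> necklace u" unfolding necklace_def by blast
  qed
qed

lemma necklace_len: "u \<noteq> [] \<Longrightarrow> v \<in> necklace u \<Longrightarrow> length v = length u"
  using necklace_rot by fastforce

lemma necklace_finite: assumes "u \<noteq> []" shows "finite (necklace u)"
  using necklace_rot[OF assms] by simp

lemma necklace_card: "primitive u \<Longrightarrow> card (necklace u) = length u"
proof -
  assume p: "primitive u"
  have "inj_on (\<lambda>k. rotate k u) {..<length u}"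
    by (rule inj_onI) (simp add: rotate_eq_prim[OF p])
  then show ?thesis using necklace_rot[OF prim_nonempty[OF p]] by (simp add: card_image)
qed

lemma necklace_rot1: "u \<noteq> [] \<Longrightarrow> rotate1 ` necklace u = necklace u"
proof -
  assume u: "u \<noteq> []"
  have sub: "rotate1 ` necklace u \<subseteq> necklace u"
  proof
    fix v assume "v \<in> rotate1 ` necklace u"
    then obtain k where "v = rotate1 (rotate k u)" using necklace_rot[OF u] by auto
    then have "v = rotate (Suc k) u" by (simp only: rotate_Suc)
    also have "\<dots> = rotate (Suc k mod length u) u" by (rule rotate_conv_mod)
    finally have "v = rotate (Suc k mod length u) u" .
    then show "v \<in> necklace u" using necklace_rot[OF u] u by auto
  qed
  have "card (rotate1 ` necklace u) = card (necklace u)"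
    by (rule card_image) (meson inj_rotate1 inj_on_subset subset_UNIV)
  then show ?thesis using card_subset_eq[OF necklace_finite[OF u] sub] by simp
qed

lemma necklace_words_set: "u \<noteq> [] \<Longrightarrow> set (necklace_words u) = necklace u"
  by (simp add: necklace_words_def necklace_finite)

lemma mset_necklace_words: assumes u: "u \<noteq> []" shows "mset (necklace_words u) = mset_set (necklace u)"
proof -
  have d: "distinct (necklace_words u)" by (simp add: necklace_words_def)
  show ?thesis using mset_set_set[OF d] necklace_words_set[OF u] by simp
qed

lemma word_pow_rot1_aux: "b # word_pow (v' @ [b]) k = word_pow (b # v') k @ [b]"
  by (induction k) (simp_all add: word_pow_def)

lemma rotate1_word_pow: "rotate1 (word_pow v k) = word_pow (rotate1 v) k"
proof (cases v)
  case Nil then show ?thesis by (simp add: word_pow_def)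
next
  case (Cons b v')
  show ?thesis
  proof (cases k)
    case 0 then show ?thesis by (simp add: word_pow_def)
  next
    case (Suc k')
    have "rotate1 (word_pow v k) = v' @ word_pow (b # v') k' @ [b]"
      using Cons Suc by (simp add: word_pow_Suc)
    also have "\<dots> = v' @ b # word_pow (v' @ [b]) k'" by (simp add: word_pow_rot1_aux)
    also have "\<dots> = word_pow (rotate1 v) k" using Cons Suc by (simp add: word_pow_Suc)
    finally show ?thesis .
  qed
qed

lemma mset_rot_concat:
  assumes "\<And>u. u \<in> set us \<Longrightarrow> mset (map rotate1 (F u)) = mset (F u)"
  shows "mset (map rotate1 (concat (map F us))) = mset (concat (map F us))"
  using assms by (induction us) auto

definition lcmlen :: "'a list list \<Rightarrow> nat" where
  "lcmlen us = Lcm (set (map length us))"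

lemma bw_table_eq: "bw_table us = sort (concat (map (\<lambda>u. map (\<lambda>v. word_pow v (lcmlen us div length v))
      (necklace_words u)) us))"
  by (simp add: bw_table_def lcmlen_def Let_def)

lemma lcmlen_pos: assumes h: "\<forall>u\<in>set us. primitive u" shows "lcmlen us > 0"
proof -
  have "0 \<notin> set (map length us)" using h prim_nonempty by fastforce
  moreover have fin: "finite (set (map length us))" by (rule finite_set)
  ultimately have "Lcm (set (map length us)) \<noteq> 0" using Lcm_0_iff_nat[OF fin] by blast
  then show ?thesis unfolding lcmlen_def by (rule neq0_conv[THEN iffD1])
qed

lemma lcmlen_dvd: "u \<in> set us \<Longrightarrow> length u dvd lcmlen us"
  unfolding lcmlen_def by (simp add: dvd_Lcm)

context
  fixes us :: "('a::linorder) list list"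
  assumes prim: "\<forall>u\<in>set us. primitive u"
begin

lemma set_bw_table: "set (bw_table us) =
   (\<Union>u\<in>set us. (\<lambda>c. word_pow (rotate c u) (lcmlen us div length u)) ` {..<length u})"
proof -
  have "set (bw_table us) = (\<Union>u\<in>set us. (\<lambda>v. word_pow v (lcmlen us div length v)) ` set (necklace_words u))"
    unfolding bw_table_eq by simp
  also have "\<dots> = (\<Union>u\<in>set us. (\<lambda>v. word_pow v (lcmlen us div length v)) ` necklace u)"
  proof (rule SUP_cong)
    fix u assume "u \<in> set us"
    then have "u \<noteq> []" using prim prim_nonempty by auto
    then show "(\<lambda>v. word_pow v (lcmlen us div length v)) ` set (necklace_words u) =
               (\<lambda>v. word_pow v (lcmlen us div length v)) ` necklace u"
      by (simp add: necklace_words_set)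
  qed simp
  also have "\<dots> = (\<Union>u\<in>set us. (\<lambda>c. word_pow (rotate c u) (lcmlen us div length u)) ` {..<length u})"
  proof (rule SUP_cong)
    fix u assume "u \<in> set us"
    then have "u \<noteq> []" using prim prim_nonempty by auto
    then show "(\<lambda>v. word_pow v (lcmlen us div length v)) ` necklace u =
       (\<lambda>c. word_pow (rotate c u) (lcmlen us div length u)) ` {..<length u}"
      by (simp add: necklace_rot image_image)
  qed simp
  finally show ?thesis .
qed

lemma len_bw_table: "length (bw_table us) = sum_list (map length us)"
proof -
  have "length (bw_table us) = sum_list (map (\<lambda>u. length (necklace_words u)) us)"
    unfolding bw_table_eq by (simp add: length_concat comp_def)
  also have "map (\<lambda>u. length (necklace_words u)) us = map length us"
  proof (rule map_cong)
    fix u assume "u \<in> set us"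
    then have p: "primitive u" using prim by simp
    have "length (necklace_words u) = card (necklace u)"
      by (simp add: necklace_words_def)
    then show "length (necklace_words u) = length u" using necklace_card[OF p] by simp
  qed simp
  finally show ?thesis .
qed

lemma bwt_bw_table: "bwt (bw_table us) (lcmlen us)"
proof
  show "sorted (bw_table us)" unfolding bw_table_eq by simp
  show "0 < lcmlen us" by (rule lcmlen_pos[OF prim])
  fix r assume "r \<in> set (bw_table us)"
  then obtain u c where u: "u \<in> set us" "r = word_pow (rotate c u) (lcmlen us div length u)"
    using set_bw_table by auto
  then show "length r = lcmlen us" using lcmlen_dvd[OF u(1)] by simp
next
  have "mset (map rotate1 (concat (map (\<lambda>u. map (\<lambda>v. word_pow v (lcmlen us div length v))
      (necklace_words u)) us))) = mset (concat (map (\<lambda>u. map (\<lambda>v. word_pow v (lcmlen us div length v))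
      (necklace_words u)) us))"
  proof (rule mset_rot_concat)
    fix u assume "u \<in> set us"
    then have u: "u \<noteq> []" using prim prim_nonempty by auto
    define g where "g = (\<lambda>v::'a list. word_pow v (lcmlen us div length v))"
    have "mset (map rotate1 (map g (necklace_words u))) = image_mset (rotate1 \<circ> g) (mset_set (necklace u))"
      by (simp add: mset_necklace_words[OF u])
    also have "\<dots> = image_mset (g \<circ> rotate1) (mset_set (necklace u))"
      by (rule image_mset_cong) (simp add: g_def rotate1_word_pow)
    also have "\<dots> = image_mset g (image_mset rotate1 (mset_set (necklace u)))"
      by (simp add: image_mset.compositionality)
    also have "image_mset rotate1 (mset_set (necklace u)) = mset_set (necklace u)"
      by (simp add: image_mset_mset_set[OF inj_on_subset[OF inj_rotate1 subset_UNIV]] necklace_rot1[OF u])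
    finally show "mset (map rotate1 (map g (necklace_words u))) = mset (map g (necklace_words u))"
      by (simp add: mset_necklace_words[OF u])
  qed
  then show "mset (map rotate1 (bw_table us)) = mset (bw_table us)"
    unfolding bw_table_eq by simp
qed

end

lemma rd_word_pow:
  assumes "v \<noteq> []" "k \<ge> 1"
  shows "rd (word_pow v k) 0 x = rd v 0 x"
proof -
  have "word_pow v k ! (i mod (k * length v)) = v ! (i mod length v)" for i
  proof -
    have kv: "k * length v > 0" using assms by simp
    have "word_pow v k ! (i mod (k * length v)) = v ! ((i mod (k * length v)) mod length v)"
      using kv by (simp add: word_pow_nth)
    also have "(i mod (k * length v)) mod length v = i mod length v"
      by (simp add: mod_mod_cancel)
    finally show ?thesis .
  qed
  then show ?thesis unfolding rd_def by simp
qed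

lemma rd_rotate:
  assumes "u \<noteq> []"
  shows "rd (rotate c u) 0 x = rd u c x"
proof -
  have "rotate c u ! (i mod length u) = u ! ((c + i) mod length u)" for i
    using assms by (simp add: nth_rotate mod_add_right_eq)
  then show ?thesis unfolding rd_def by simp
qed

lemma rotate_word_pow: "rotate a (word_pow v k) = word_pow (rotate a v) k"
  by (induction a) (simp_all add: rotate1_word_pow)

lemma word_pow_inj:
  assumes "k \<ge> 1" "length v = length v'" "word_pow v k = word_pow v' k"
  shows "v = v'"
proof -
  obtain k' where k: "k = Suc k'" using assms(1) by (cases k) auto
  have "v = take (length v) (word_pow v k)" unfolding k word_pow_Suc by simp
  also have "\<dots> = take (length v) (word_pow v' k)" by (simp only: assms(3))
  also have "\<dots> = v'" unfolding k word_pow_Suc assms(2) by simp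
  finally show ?thesis .
qed

lemma row_rot:
  assumes p: "primitive u" and k: "k \<ge> 1"
  shows "rotate a (word_pow (rotate c u) k) = rotate b (word_pow (rotate c u) k) \<longleftrightarrow>
         a mod length u = b mod length u"
proof -
  have "rotate a (word_pow (rotate c u) k) = rotate b (word_pow (rotate c u) k) \<longleftrightarrow>
        rotate (a + c) u = rotate (b + c) u"
  proof
    assume "rotate a (word_pow (rotate c u) k) = rotate b (word_pow (rotate c u) k)"
    then have "word_pow (rotate (a + c) u) k = word_pow (rotate (b + c) u) k"
      by (simp add: rotate_word_pow rotate_rotate)
    then show "rotate (a + c) u = rotate (b + c) u" by (rule word_pow_inj[OF k, rotated]) simp
  next
    assume "rotate (a + c) u = rotate (b + c) u"
    then show "rotate a (word_pow (rotate c u) k) = rotate b (word_pow (rotate c u) k)"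
      by (simp add: rotate_word_pow rotate_rotate)
  qed
  also have "\<dots> \<longleftrightarrow> (a + c) mod length u = (b + c) mod length u" by (rule rotate_eq_prim[OF p])
  also have "\<dots> \<longleftrightarrow> a mod length u = b mod length u"
  proof
    assume "(a + c) mod length u = (b + c) mod length u"
    then have "(c + a) mod length u = (c + b) mod length u" by (simp add: add.commute)
    then show "a mod length u = b mod length u" by (rule mod_cancel_nat)
  next
    assume "a mod length u = b mod length u"
    then show "(a + c) mod length u = (b + c) mod length u" by (rule mod_add_cong) simp
  qed
  finally show ?thesis .
qed

lemma POI_I:
  assumes "dom f \<subseteq> {..<n}" "ran f \<subseteq> {..<n}"
    and ord: "\<And>i j. i \<in> dom f \<Longrightarrow> j \<in> dom f \<Longrightarrow> i < j \<Longrightarrow> the (f i) < the (f j)"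
  shows "f \<in> POI n"
proof -
  have "inj_on f (dom f)"
  proof (rule inj_onI)
    fix i j assume ij: "i \<in> dom f" "j \<in> dom f" "f i = f j"
    show "i = j"
    proof (rule ccontr)
      assume "i \<noteq> j"
      then have "i < j \<or> j < i" by auto
      then show False using ord[of i j] ord[of j i] ij by auto
    qed
  qed
  then show ?thesis unfolding POI_def using assms by auto
qed

lemma map_of_zip_POI:
  assumes sx: "sorted_wrt (<) xs" and sy: "sorted_wrt (<) ys" and l: "length xs = length ys"
    and bx: "set xs \<subseteq> {..<n}" and bys: "set ys \<subseteq> {..<n}"
  shows "map_of (zip xs ys) \<in> POI n"
proof (rule POI_I)
  have dx: "distinct xs" using sx strict_sorted_iff by blast
  show "dom (map_of (zip xs ys)) \<subseteq> {..<n}" using bx l by (simp add: dom_map_of_zip)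
  show "ran (map_of (zip xs ys)) \<subseteq> {..<n}" using bys l dx by (simp add: ran_map_of_zip)
  fix i j assume i: "i \<in> dom (map_of (zip xs ys))" and j: "j \<in> dom (map_of (zip xs ys))" and ij: "i < j"
  obtain p where p: "p < length xs" "i = xs ! p" using i l by (auto simp: dom_map_of_zip in_set_conv_nth)
  obtain q where q: "q < length xs" "j = xs ! q" using j l by (auto simp: dom_map_of_zip in_set_conv_nth)
  have pq: "p < q"
  proof (rule ccontr)
    assume "\<not> p < q"
    then have "q < p \<or> q = p" by auto
    then show False
    proof
      assume "q < p" then have "xs ! q < xs ! p" using sorted_wrt_nth_less[OF sx] p by blast
      then show False using p q ij by simp
    next
      assume "q = p" then show False using p q ij by simp
    qed
  qed
  have "map_of (zip xs ys) i = Some (ys ! p)" using map_of_zip_nth[OF l dx] p l by simp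
  moreover have "map_of (zip xs ys) j = Some (ys ! q)" using map_of_zip_nth[OF l dx] q l by simp
  moreover have "ys ! p < ys ! q" using sorted_wrt_nth_less[OF sy pq] q l by simp
  ultimately show "the (map_of (zip xs ys) i) < the (map_of (zip xs ys) j)" by simp
qed

lemma length_positions: "length (positions a w) = size (filter_mset (\<lambda>x. x = a) (mset w))"
proof -
  have "length (positions a w) = card {i. i < length w \<and> w ! i = a}"
    unfolding positions_def by (rule len_filter_upt)
  also have "\<dots> = size (filter_mset (\<lambda>x. x = a) (mset w))"
    by (rule card_filter_mset[of w "\<lambda>x. x = a"])
  finally show ?thesis .
qed

lemma spl_POI: "std_perm_letter (w :: ('a::linorder) list) a \<in> POI (length w)"
  unfolding std_perm_letter_def
proof (rule map_of_zip_POI)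
  show "sorted_wrt (<) (positions a (sort w))" unfolding positions_def
    by (rule sorted_wrt_filter) (rule sorted_wrt_upt)
  show "sorted_wrt (<) (positions a w)" unfolding positions_def
    by (rule sorted_wrt_filter) (rule sorted_wrt_upt)
  show "length (positions a (sort w)) = length (positions a w)"
    by (simp add: length_positions)
  show "set (positions a (sort w)) \<subseteq> {..<length w}" by (auto simp: positions_def)
  show "set (positions a w) \<subseteq> {..<length w}" by (auto simp: positions_def)
qed

lemma POI_pcomp:
  assumes f: "f \<in> POI n" and g: "g \<in> POI n"
  shows "pcomp f g \<in> POI n"
proof (rule POI_I)
  have df: "dom f \<subseteq> {..<n}" and rf: "ran f \<subseteq> {..<n}"
    and of: "\<And>i j. i \<in> dom f \<Longrightarrow> j \<in> dom f \<Longrightarrow> i < j \<Longrightarrow> the (f i) < the (f j)"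
    using f unfolding POI_def by auto
  have dg: "dom g \<subseteq> {..<n}" and rg: "ran g \<subseteq> {..<n}"
    and og: "\<And>i j. i \<in> dom g \<Longrightarrow> j \<in> dom g \<Longrightarrow> i < j \<Longrightarrow> the (g i) < the (g j)"
    using g unfolding POI_def by auto
  show "dom (pcomp f g) \<subseteq> {..<n}"
    using df by (auto simp: pcomp_def map_comp_def dom_def split: option.splits)
  show "ran (pcomp f g) \<subseteq> {..<n}"
    using rg by (auto simp: pcomp_def map_comp_def ran_def split: option.splits)
  fix i j assume i: "i \<in> dom (pcomp f g)" and j: "j \<in> dom (pcomp f g)" and ij: "i < j"
  obtain i' i'' where ii: "f i = Some i'" "g i' = Some i''"
    using i by (auto simp: pcomp_def map_comp_def dom_def split: option.splits)
  obtain j' j'' where jj: "f j = Some j'" "g j' = Some j''"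
    using j by (auto simp: pcomp_def map_comp_def dom_def split: option.splits)
  have "i' < j'" using of[of i j] ii jj ij by (auto simp: dom_def)
  then have "i'' < j''" using og[of i' j'] ii jj by (auto simp: dom_def)
  then show "the (pcomp f g i) < the (pcomp f g j)" using ii jj by (simp add: pcomp_def)
qed

lemma SM_POI: "SM us \<subseteq> POI (length (BW us))"
proof
  fix f assume "f \<in> SM us"
  then show "f \<in> POI (length (BW us))" unfolding SM_def
  proof (induction rule: gen_subsemigroup.induct)
    case (base x) then show ?case using spl_POI by auto
  next
    case (step x y) then show ?case using POI_pcomp by blast
  qed
qed

lemma synt_cong_equiv: "equiv {x. x \<noteq> []} (synt_cong u)"
proof (rule equivI)
  show "synt_cong u \<subseteq> {x. x \<noteq> []} \<times> {x. x \<noteq> []}" by (auto simp: synt_cong_def)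
  show "refl_on {x. x \<noteq> []} (synt_cong u)" by (auto simp: refl_on_def synt_cong_def)
  show "sym (synt_cong u)" by (auto simp: sym_def synt_cong_def)
  show "trans (synt_cong u)" by (auto simp: trans_def synt_cong_def)
qed

lemma cong_app:
  assumes "(x, x') \<in> synt_cong u" "(y, y') \<in> synt_cong u"
  shows "(x @ y, x' @ y') \<in> synt_cong u"
proof -
  have "p @ (x @ y) @ q \<in> upowers u \<longleftrightarrow> p @ (x' @ y') @ q \<in> upowers u" for p q
  proof -
    have "p @ (x @ y) @ q \<in> upowers u \<longleftrightarrow> p @ x @ (y @ q) \<in> upowers u" by simp
    also have "\<dots> \<longleftrightarrow> p @ x' @ (y @ q) \<in> upowers u" using assms(1) by (simp add: synt_cong_def)
    also have "\<dots> \<longleftrightarrow> (p @ x') @ y @ q \<in> upowers u" by simp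
    also have "\<dots> \<longleftrightarrow> (p @ x') @ y' @ q \<in> upowers u" using assms(2) by (simp only: synt_cong_def) blast
    also have "\<dots> \<longleftrightarrow> p @ (x' @ y') @ q \<in> upowers u" by simp
    finally show ?thesis .
  qed
  then show ?thesis using assms by (auto simp: synt_cong_def)
qed

lemma synt_mult_cls:
  assumes x: "x \<noteq> []" and y: "y \<noteq> []"
  shows "synt_mult u (synt_cong u `` {x}) (synt_cong u `` {y}) = synt_cong u `` {x @ y}"
proof
  show "synt_mult u (synt_cong u `` {x}) (synt_cong u `` {y}) \<subseteq> synt_cong u `` {x @ y}"
  proof
    fix z assume "z \<in> synt_mult u (synt_cong u `` {x}) (synt_cong u `` {y})"
    then obtain x' y' where h: "(x, x') \<in> synt_cong u" "(y, y') \<in> synt_cong u"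
      "(x' @ y', z) \<in> synt_cong u"
      unfolding synt_mult_def by blast
    have "(x @ y, x' @ y') \<in> synt_cong u" by (rule cong_app[OF h(1,2)])
    then have "(x @ y, z) \<in> synt_cong u" using h(3) synt_cong_equiv[of u]
      unfolding equiv_def trans_def by blast
    then show "z \<in> synt_cong u `` {x @ y}" by simp
  qed
next
  show "synt_cong u `` {x @ y} \<subseteq> synt_mult u (synt_cong u `` {x}) (synt_cong u `` {y})"
  proof
    fix z assume z: "z \<in> synt_cong u `` {x @ y}"
    have "(x, x) \<in> synt_cong u" "(y, y) \<in> synt_cong u" using x y by (auto simp: synt_cong_def)
    then show "z \<in> synt_mult u (synt_cong u `` {x}) (synt_cong u `` {y})"
      using z unfolding synt_mult_def by blast
  qed
qed

definition cls :: "'a list list \<Rightarrow> 'a list \<Rightarrow> 'a list set list" where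
  "cls us x = map (\<lambda>u. synt_cong u `` {x}) us"

lemma cls_eq:
  assumes x: "x \<noteq> []" and y: "y \<noteq> []"
  shows "cls us x = cls us y \<longleftrightarrow> (\<forall>u\<in>set us. (x, y) \<in> synt_cong u)"
  unfolding cls_def map_eq_conv
  using x y by (simp add: eq_equiv_class_iff[OF synt_cong_equiv])

lemma prod_mult_cls:
  assumes x: "x \<noteq> []" and y: "y \<noteq> []"
  shows "prod_mult us (cls us x) (cls us y) = cls us (x @ y)"
  by (rule nth_equalityI) (simp_all add: prod_mult_def cls_def synt_mult_cls[OF x y])

context
  fixes us :: "('a::{linorder,finite}) list list"
  assumes prim: "\<forall>u\<in>set us. primitive u"
begin

lemma row_cond:
  assumes u: "u \<in> set us"
  shows "((rd (word_pow (rotate c u) (lcmlen us div length u)) 0 x \<longleftrightarrow>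
            rd (word_pow (rotate c u) (lcmlen us div length u)) 0 y) \<and>
          (rd (word_pow (rotate c u) (lcmlen us div length u)) 0 x \<longrightarrow>
            rotate (length x) (word_pow (rotate c u) (lcmlen us div length u)) =
            rotate (length y) (word_pow (rotate c u) (lcmlen us div length u)))) \<longleftrightarrow>
         ((rd u c x \<longleftrightarrow> rd u c y) \<and> (rd u c x \<longrightarrow> length x mod length u = length y mod length u))"
proof -
  have p: "primitive u" using prim u by simp
  have ne: "u \<noteq> []" using prim_nonempty[OF p] .
  have k: "lcmlen us div length u \<ge> 1"
  proof -
    have "length u dvd lcmlen us" by (rule lcmlen_dvd[OF u])
    moreover have "lcmlen us > 0" by (rule lcmlen_pos[OF prim])
    ultimately obtain q where q: "lcmlen us = length u * q" "lcmlen us > 0" by (auto elim: dvdE)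
    then have "q > 0" by (cases q) auto
    moreover have "lcmlen us div length u = q" using q(1) ne by simp
    ultimately show ?thesis by simp
  qed
  have rne: "rotate c u \<noteq> []" using ne by simp
  have rdr: "rd (word_pow (rotate c u) (lcmlen us div length u)) 0 z = rd u c z" for z
    using rd_word_pow[OF rne k] rd_rotate[OF ne] by simp
  show ?thesis unfolding rdr row_rot[OF p k] by simp
qed

lemma key:
  assumes x: "x \<noteq> []" and y: "y \<noteq> []"
  shows "ppow (BW us) x = ppow (BW us) y \<longleftrightarrow> (\<forall>u\<in>set us. (x, y) \<in> synt_cong u)"
proof -
  interpret bwt "bw_table us" "lcmlen us" by (rule bwt_bw_table[OF prim])
  define cond where "cond r \<longleftrightarrow> (rd r 0 x \<longleftrightarrow> rd r 0 y) \<and>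
       (rd r 0 x \<longrightarrow> rotate (length x) r = rotate (length y) r)" for r
  have "ppow (BW us) x = ppow (BW us) y \<longleftrightarrow> (\<forall>i<length (bw_table us). cond (bw_table us ! i))"
    unfolding BW_def cond_def by (rule ppow_eq_iff[OF x y])
  also have "\<dots> \<longleftrightarrow> (\<forall>r\<in>set (bw_table us). cond r)" by (simp add: all_set_conv_all_nth)
  also have "\<dots> \<longleftrightarrow> (\<forall>u\<in>set us. \<forall>c<length u. cond (word_pow (rotate c u) (lcmlen us div length u)))"
    unfolding set_bw_table[OF prim] by blast
  also have "\<dots> \<longleftrightarrow> (\<forall>u\<in>set us. \<forall>c<length u. (rd u c x \<longleftrightarrow> rd u c y) \<and>
          (rd u c x \<longrightarrow> length x mod length u = length y mod length u))"
    unfolding cond_def using row_cond by simp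
  also have "\<dots> \<longleftrightarrow> (\<forall>u\<in>set us. \<forall>c. (rd u c x \<longleftrightarrow> rd u c y) \<and>
          (rd u c x \<longrightarrow> length x mod length u = length y mod length u))"
  proof (intro ball_cong refl iffI allI)
    fix u c assume u: "u \<in> set us"
      and h: "\<forall>c<length u. (rd u c x \<longleftrightarrow> rd u c y) \<and>
          (rd u c x \<longrightarrow> length x mod length u = length y mod length u)"
    have "length u > 0" using prim u prim_nonempty by auto
    then show "(rd u c x \<longleftrightarrow> rd u c y) \<and>
          (rd u c x \<longrightarrow> length x mod length u = length y mod length u)"
      using h[rule_format, of "c mod length u"] rd_mod[of u c] by simp
  qed simp
  also have "\<dots> \<longleftrightarrow> (\<forall>u\<in>set us. (x, y) \<in> synt_cong u)"
    using synt_cong_iff[OF _ x y] prim prim_nonempty by auto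
  finally show ?thesis .
qed

end

theorem theorem2p6:
  fixes us :: "('a::{linorder,finite}) list list"
  assumes "\<forall>u\<in>set us. primitive u"
  shows "SM us \<subseteq> POI (sum_list (map length us)) \<and>
         (\<exists>T. subdirect_product us T \<and> sg_iso (SM us) pcomp T (prod_mult us))"
proof
  have "length (BW us) = sum_list (map length us)"
    unfolding BW_def using len_bw_table[OF assms] by simp
  then show "SM us \<subseteq> POI (sum_list (map length us))" using SM_POI[of us] by simp
next
  define T where "T = cls us ` {x. x \<noteq> []}"
  have sub: "subdirect_product us T"
    unfolding subdirect_product_def
  proof (intro conjI ballI allI impI)
    show "T \<subseteq> {xs. length xs = length us \<and> (\<forall>i<length us. xs ! i \<in> synt_sg (us ! i))}"
      unfolding T_def cls_def synt_sg_def by (auto intro: quotientI)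
  next
    fix a b assume "a \<in> T" "b \<in> T"
    then obtain x y where xy: "x \<noteq> []" "y \<noteq> []" "a = cls us x" "b = cls us y" unfolding T_def by blast
    then have "prod_mult us a b = cls us (x @ y)" using prod_mult_cls[OF xy(1,2)] by simp
    moreover have "x @ y \<in> {x. x \<noteq> []}" using xy by simp
    ultimately show "prod_mult us a b \<in> T" unfolding T_def by (rule image_eqI)
  next
    fix i assume i: "i < length us"
    show "(\<lambda>xs. xs ! i) ` T = synt_sg (us ! i)"
    proof
      show "(\<lambda>xs. xs ! i) ` T \<subseteq> synt_sg (us ! i)"
        unfolding T_def cls_def synt_sg_def using i by (auto intro: quotientI)
    next
      show "synt_sg (us ! i) \<subseteq> (\<lambda>xs. xs ! i) ` T"
      proof
        fix X assume "X \<in> synt_sg (us ! i)"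
        then obtain x where x: "X = synt_cong (us ! i) `` {x}" "x \<noteq> []"
          unfolding synt_sg_def by (auto elim: quotientE)
        then have "X = cls us x ! i" using i by (simp add: cls_def)
        then show "X \<in> (\<lambda>xs. xs ! i) ` T" unfolding T_def using x by blast
      qed
    qed
  qed
  define phi where "phi f = cls us (SOME x. x \<noteq> [] \<and> ppow (BW us) x = f)" for f
  have phi: "phi (ppow (BW us) x) = cls us x" if x: "x \<noteq> []" for x
  proof -
    define x' where "x' = (SOME x'. x' \<noteq> [] \<and> ppow (BW us) x' = ppow (BW us) x)"
    have x': "x' \<noteq> [] \<and> ppow (BW us) x' = ppow (BW us) x"
      unfolding x'_def by (rule someI[of _ x]) (use x in simp)
    then have "\<forall>u\<in>set us. (x', x) \<in> synt_cong u" using key[OF assms, of x' x] x by simp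
    then have "cls us x' = cls us x" using cls_eq[of x' x us] x x' by simp
    then show ?thesis unfolding phi_def x'_def by simp
  qed
  have iso: "sg_iso (SM us) pcomp T (prod_mult us)"
    unfolding sg_iso_def
  proof (intro exI conjI ballI)
    show "bij_betw phi (SM us) T"
      unfolding bij_betw_def
    proof
      show "inj_on phi (SM us)"
      proof (rule inj_onI)
        fix f g assume "f \<in> SM us" "g \<in> SM us" and fg: "phi f = phi g"
        then obtain x y where xy: "x \<noteq> []" "y \<noteq> []" "f = ppow (BW us) x" "g = ppow (BW us) y"
          unfolding SM_eq by blast
        then have "cls us x = cls us y" using fg phi by simp
        then have "\<forall>u\<in>set us. (x, y) \<in> synt_cong u" using cls_eq[OF xy(1,2)] by simp
        then show "f = g" using key[OF assms xy(1,2)] xy by simp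
      qed
      show "phi ` SM us = T"
      proof
        show "phi ` SM us \<subseteq> T" unfolding SM_eq T_def using phi by auto
        show "T \<subseteq> phi ` SM us"
        proof
          fix t assume "t \<in> T"
          then obtain x where x: "x \<noteq> []" "t = cls us x" unfolding T_def by blast
          then have "t = phi (ppow (BW us) x)" using phi by simp
          moreover have "ppow (BW us) x \<in> SM us" unfolding SM_eq using x by blast
          ultimately show "t \<in> phi ` SM us" by blast
        qed
      qed
    qed
  next
    fix f g assume "f \<in> SM us" "g \<in> SM us"
    then obtain x y where xy: "x \<noteq> []" "y \<noteq> []" "f = ppow (BW us) x" "g = ppow (BW us) y"
      unfolding SM_eq by blast
    have "phi (pcomp f g) = phi (ppow (BW us) (x @ y))" using xy by (simp add: ppow_append)
    also have "\<dots> = cls us (x @ y)" using phi xy by simp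
    also have "\<dots> = prod_mult us (cls us x) (cls us y)" by (rule prod_mult_cls[OF xy(1,2), symmetric])
    also have "\<dots> = prod_mult us (phi f) (phi g)" using phi xy by simp
    finally show "phi (pcomp f g) = prod_mult us (phi f) (phi g)" .
  qed
  show "\<exists>T. subdirect_product us T \<and> sg_iso (SM us) pcomp T (prod_mult us)"
    using sub iso by blast
qed

end
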